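(* Let $k\ge 4$, $n=2k-1$, $\lambda\in\overline{\mathcal{U}}_{T_n}$, and let $Y=\mathrm{KN}(S_\lambda)$. Write the elements of $S_\lambda$ increasingly as $0=s_0<s_1<s_2<\cdots$ and let $z$ be the index with $s_z=n-2$. Then $$\sum_{i=2}^{z} h_{i,z+1}=k,$$ where $h_{i,j}$ denotes the hook length of the cell of $Y$ in row $i$ and column $j$.
   Context: A partition of $N$ into distinct parts is a sequence $\lambda=(\lambda_1<\dots<\lambda_t)$ of positive integers with sum $N$ and $t\ge 2$, identified with its set of parts. Missing parts: $\mathcal{M}_\lambda=\{1,\dots,\lambda_t\}\setminus\lambda$. $\lambda$ is refinable if two distinct missing parts sum to a part of $\lambda$, unrefinable otherwise; $\mathcal{U}_N$ is the set of unrefinable partitions of $N$. An element of $\mathcal{U}_N$ is maximal if its largest part is the maximum of the largest parts of elements of $\mathcal{U}_N$; $\widetilde{\mathcal{U}}_N$ is the set of these and $\overline{\mathcal{U}}_N=\{\lambda\in\widetilde{\mathcal{U}}_N:\#\mathcal{M}_\lambda=\lfloor\lambda_t/2\rfloor\}$. $T_n=n(n+1)/2$. For $\lambda\in\overline{\mathcal{U}}_{T_n}$ (with $n=2k-1$, $k\ge 4$) one knows $\lambda_t=2n-4$, $t=n-2$ and $n-2\notin\lambda$. $S_\lambda=\mathbb{N}_0\setminus\lambda$. The Keith–Nath transformation sends a set $S\subseteq\mathbb{N}_0$ with $0\in S$ and finite complement to the Young diagram $\mathrm{KN}(S)$ whose boundary is the lattice path that, starting at the origin, takes for $j=0,1,\dots,\max(\mathbb{N}_0\setminus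 S)$ an east step if $j\in S$ and a north step otherwise. Diagrams are in English convention (rows numbered top to bottom, columns left to right); hook length = (cells to the right in the row) + (cells below in the column) + 1. *)

theory Defs
  imports Main "HOL-Library.Infinite_Set"
begin

definition distinct_partition :: "nat \<Rightarrow> nat set \<Rightarrow> bool" where
  "distinct_partition N lam \<longleftrightarrow> finite lam \<and> 0 \<notin> lam \<and> card lam \<ge> 2 \<and> \<Sum>lam = N"

definition missing_parts :: "nat set \<Rightarrow> nat set" where
  "missing_parts lam = {1..Max lam} - lam"

definition refinable :: "nat set \<Rightarrow> bool" where
  "refinable lam \<longleftrightarrow> (\<exists>a\<in>missing_parts lam. \<exists>b\<in>missing_parts lam. a \<noteq> b \<and> a + b \<in> lam)"

definition unrefinable_set :: "nat \<Rightarrow> nat set set" where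
  "unrefinable_set N = {lam. distinct_partition N lam \<and> \<not> refinable lam}"

definition maximal_unrefinable :: "nat \<Rightarrow> nat set set" where
  "maximal_unrefinable N = {lam \<in> unrefinable_set N. \<forall>mu\<in>unrefinable_set N. Max mu \<le> Max lam}"

definition overline_U :: "nat \<Rightarrow> nat set set" where
  "overline_U N = {lam \<in> maximal_unrefinable N. card (missing_parts lam) = Max lam div 2}"

definition T :: "nat \<Rightarrow> nat" where
  "T n = n * (n + 1) div 2"

text \<open>Keith--Nath: boundary path, True = east step, False = north step, for j = 0..max gap.\<close>
definition kn_path :: "nat set \<Rightarrow> bool list" where
  "kn_path S = map (\<lambda>j. j \<in> S) [0..<Suc (Max (UNIV - S))]"

text \<open>Young diagram as a set of cells (row, column), 1-indexed, English convention
  (rows numbered top to bottom). The north step preceded by r north steps bounds the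
  row N - r (N = total number of north steps), whose length is the number of east steps
  before it.\<close>
definition KN :: "nat set \<Rightarrow> (nat \<times> nat) set" where
  "KN S = (let P = kn_path S; N = length (filter Not P) in
     {(i, j). 1 \<le> i \<and> i \<le> N \<and> 1 \<le> j \<and>
        (\<exists>p < length P. \<not> P ! p \<and> length (filter Not (take p P)) = N - i
            \<and> j \<le> length (filter id (take p P)))})"

definition hook_length :: "(nat \<times> nat) set \<Rightarrow> nat \<Rightarrow> nat \<Rightarrow> nat" where
  "hook_length Y i j = card {j'. j < j' \<and> (i, j') \<in> Y} + card {i'. i < i' \<and> (i', j) \<in> Y} + 1"

end

theory Submission
  imports Defs
begin


lemma pair_structure:
  fixes L :: "nat set"
  assumes fin: "finite L" and ne: "L \<noteq> {}" and z0: "0 \<notin> L" and nref: "\<not> refinable L"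
    and cM: "card (missing_parts L) = Max L div 2"
  shows "\<And>a. 1 \<le> a \<Longrightarrow> 2*a < Max L \<Longrightarrow> (a \<in> L \<longleftrightarrow> Max L - a \<notin> L)"
    and "even (Max L) \<Longrightarrow> Max L div 2 \<notin> L"
proof -
  define m where "m = Max L"
  define M where "M = missing_parts L"
  have mL: "m \<in> L" using fin ne m_def by simp
  have Mdef: "M = {1..m} - L" by (simp add: M_def m_def missing_parts_def)
  have nr: "\<And>x y. x \<in> M \<Longrightarrow> y \<in> M \<Longrightarrow> x \<noteq> y \<Longrightarrow> x + y \<notin> L"
    using nref unfolding refinable_def M_def by blast
  define f where "f x = min x (m - x)" for x
  have inj: "inj_on f M"
  proof (rule inj_onI)
    fix x y assume x: "x \<in> M" and y: "y \<in> M" and e: "f x = f y"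
    show "x = y"
    proof (rule ccontr)
      assume "x \<noteq> y"
      with x y e have "x + y = m" unfolding f_def Mdef by (auto simp: min_def split: if_splits)
      with nr[OF x y \<open>x \<noteq> y\<close>] mL show False by simp
    qed
  qed
  have sub: "f ` M \<subseteq> {1..m div 2}"
  proof
    fix y assume "y \<in> f ` M"
    then obtain x where x: "x \<in> M" "y = f x" by auto
    have "x \<noteq> m" using x mL Mdef by auto
    with x show "y \<in> {1..m div 2}" unfolding f_def Mdef by auto
  qed
  have finM: "finite M" by (simp add: Mdef)
  have "card (f ` M) = card {1..m div 2}"
    using card_image[OF inj] cM M_def m_def by simp
  hence img: "f ` M = {1..m div 2}"
    using card_subset_eq[OF _ sub] by simp
  show "a \<in> L \<longleftrightarrow> Max L - a \<notin> L" if a: "1 \<le> a" "2*a < Max L" for a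
  proof -
    have "a \<in> f ` M" using img a m_def by auto
    then obtain x where x: "x \<in> M" "a = f x" by auto
    have "x \<le> m" using x(1) Mdef by auto
    hence x2: "x = a \<or> x = m - a" using x(2) unfolding f_def by (auto simp: min_def split: if_splits)
    have one: "a \<notin> L \<or> m - a \<notin> L" using x2 x(1) Mdef by auto
    have aM: "a \<notin> L \<Longrightarrow> a \<in> M" using a m_def Mdef by auto
    have bM: "m - a \<notin> L \<Longrightarrow> m - a \<in> M" using a m_def Mdef by auto
    have "\<not> (a \<notin> L \<and> m - a \<notin> L)"
    proof
      assume h: "a \<notin> L \<and> m - a \<notin> L"
      have "a \<noteq> m - a" using a m_def by auto
      moreover have "a + (m - a) = m" using a m_def by auto
      ultimately show False using nr[OF aM bM] h mL by auto
    qed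
    with one show ?thesis using m_def by auto
  qed
  show "Max L div 2 \<notin> L" if ev: "even (Max L)"
  proof -
    have pos: "m > 0" using mL z0 by (cases m) auto
    have "m div 2 \<in> f ` M" using img pos ev m_def by auto
    then obtain x where x: "x \<in> M" "m div 2 = f x" by auto
    have "x \<le> m" using x(1) Mdef by auto
    hence "x = m div 2" using x(2) ev m_def unfolding f_def by (auto simp: min_def split: if_splits elim!: evenE)
    with x Mdef m_def show ?thesis by auto
  qed
qed




lemma decomp:
  fixes L :: "nat set" and m r :: nat and D :: "nat set"
  assumes fin: "finite L" and z0: "0 \<notin> L" and ne: "L \<noteq> {}" and mdef: "m = Max L"
    and pair: "\<And>a. 1 \<le> a \<Longrightarrow> 2*a < m \<Longrightarrow> (a \<in> L \<longleftrightarrow> m - a \<notin> L)"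
    and ev: "even m \<Longrightarrow> m div 2 \<notin> L"
    and rdef: "r = (m - 1) div 2" and Ddef: "D = {a \<in> {1..r}. a \<notin> L}"
  shows "L = ({1..r} - D) \<union> (\<lambda>a. m - a) ` D \<union> {m}"
    and "\<Sum>L = \<Sum>{1..r} + m + (\<Sum>a\<in>D. m - 2*a)"
proof -
  have mL: "m \<in> L" using fin ne mdef by simp
  have m1: "m \<ge> 1" using mL z0 by (cases m) auto
  have le: "\<And>x. x \<in> L \<Longrightarrow> x \<le> m" using fin mdef by simp
  have r2: "2 * r < m" using rdef m1 by auto
  show eq: "L = ({1..r} - D) \<union> (\<lambda>a. m - a) ` D \<union> {m}"
  proof (intro equalityI subsetI)
    fix x assume x: "x \<in> L"
    have x1: "x \<ge> 1" using x z0 by (cases x) auto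
    show "x \<in> ({1..r} - D) \<union> (\<lambda>a. m - a) ` D \<union> {m}"
    proof (cases "x \<le> r \<or> x = m")
      case True then show ?thesis using x x1 Ddef by auto
    next
      case False
      have xm: "x < m" using le[OF x] False by auto
      have "x \<noteq> m div 2 \<or> odd m" using ev x by auto
      hence a2: "2 * (m - x) < m" using False xm rdef by (auto elim!: evenE oddE)
      have a1: "1 \<le> m - x" using xm by auto
      have "m - (m - x) = x" using xm by auto
      hence "m - x \<notin> L" using pair[OF a1 a2] x by auto
      moreover have "m - x \<le> r" using a2 rdef by auto
      ultimately have "m - x \<in> D" using Ddef a1 by auto
      then show ?thesis using \<open>m - (m - x) = x\<close> by (metis UnI1 UnI2 image_eqI)
    qed
  next
    fix x assume "x \<in> ({1..r} - D) \<union> (\<lambda>a. m - a) ` D \<union> {m}"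
    then consider "x \<in> {1..r} - D" | a where "a \<in> D" "x = m - a" | "x = m" by auto
    then show "x \<in> L"
    proof cases
      case 1 then show ?thesis using Ddef by auto
    next
      case 2
      have "1 \<le> a" "2 * a < m" using 2 Ddef r2 by auto
      then show ?thesis using pair[of a] 2 Ddef by auto
    qed (use mL in auto)
  qed
  have Dsub: "D \<subseteq> {1..r}" using Ddef by auto
  have finD: "finite D" using Dsub finite_subset by blast
  have inj: "inj_on (\<lambda>a. m - a) D"
  proof (rule inj_onI)
    fix x y assume "x \<in> D" "y \<in> D" "m - x = m - y"
    then have "x \<le> r" "y \<le> r" "m - x = m - y" using Dsub by auto
    then show "x = y" using r2 by linarith
  qed
  have bnd: "r < m - a \<and> m - a < m" if "a \<in> D" for a
  proof -
    have "1 \<le> a" "a \<le> r" using that Dsub by auto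
    then show ?thesis using r2 by linarith
  qed
  have d1: "({1..r} - D) \<inter> (\<lambda>a. m - a) ` D = {}" using bnd by fastforce
  have d2: "(({1..r} - D) \<union> (\<lambda>a. m - a) ` D) \<inter> {m} = {}" using bnd r2 by fastforce
  have "\<Sum>L = \<Sum>(({1..r} - D) \<union> (\<lambda>a. m - a) ` D) + m"
    by (subst eq, subst sum.union_disjoint) (use d2 finD in auto)
  also have "\<Sum>(({1..r} - D) \<union> (\<lambda>a. m - a) ` D) = \<Sum>({1..r} - D) + \<Sum>((\<lambda>a. m - a) ` D)"
    by (rule sum.union_disjoint) (use d1 finD in auto)
  also have "\<Sum>((\<lambda>a. m - a) ` D) = (\<Sum>a\<in>D. m - a)" by (rule sum.reindex_cong[OF inj]) auto
  also have "(\<Sum>a\<in>D. m - a) = (\<Sum>a\<in>D. (m - 2*a) + a)"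
    by (rule sum.cong) (use Dsub r2 in auto)
  also have "\<dots> = (\<Sum>a\<in>D. m - 2*a) + \<Sum>D" by (simp add: sum.distrib)
  also have "\<Sum>({1..r} - D) = \<Sum>{1..r} - \<Sum>D" using sum_diff_nat[OF finD Dsub, of id] by simp
  finally show "\<Sum>L = \<Sum>{1..r} + m + (\<Sum>a\<in>D. m - 2*a)"
    using sum_mono2[OF _ Dsub, of id] by simp
qed




lemma T_eq: "T n = \<Sum>{1..n}"
  unfolding T_def using gauss_sum_from_Suc_0[of n, where 'a=nat] by simp

lemma sum_Icc_Suc: "\<Sum>{1..Suc r} = \<Sum>{1..r} + Suc r"
  by simp

lemma bound:
  fixes m r n :: nat and D :: "nat set"
  assumes n7: "n \<ge> 7" and rdef: "r = (m - 1) div 2" and Dsub: "D \<subseteq> {1..r}"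
    and S: "T n = \<Sum>{1..r} + m + (\<Sum>a\<in>D. m - 2*a)"
  shows "m \<le> 2*n - 4"
proof (rule ccontr)
  assume "\<not> m \<le> 2*n - 4"
  then consider "m \<ge> 2*n - 1" | "m = 2*n - 2" | "m = 2*n - 3" by linarith
  then show False
  proof cases
    case 1
    have "r \<ge> n - 1" using 1 rdef n7 by auto
    hence "\<Sum>{1..n-1} \<le> \<Sum>{1..r}" by (intro sum_mono2) auto
    moreover have "\<Sum>{1..n} = \<Sum>{1..n-1} + n" using n7 sum_Icc_Suc[of "n-1"] by simp
    ultimately show False using S 1 n7 unfolding T_eq by linarith
  next
    case 2
    have r: "r = n - 2" using 2 rdef n7 by auto
    have "\<Sum>{1..n} = \<Sum>{1..n-2} + (n-1) + n" using n7 sum_Icc_Suc[of "n-1"] sum_Icc_Suc[of "n-2"]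
      by (simp add: Suc_diff_Suc numeral_2_eq_2)
    hence e: "(\<Sum>a\<in>D. m - 2*a) = 1" using S 2 n7 r T_eq[of n] by (simp only:) linarith
    have "(\<Sum>a\<in>D. m - 2*a) = (\<Sum>a\<in>D. 2 * (n - 1 - a))" using 2 by (intro sum.cong) auto
    also have "\<dots> = 2 * (\<Sum>a\<in>D. n - 1 - a)" by (simp add: sum_distrib_left)
    finally show False using e by presburger
  next
    case 3
    have r: "r = n - 2" using 3 rdef n7 by auto
    have "\<Sum>{1..n} = \<Sum>{1..n-2} + (n-1) + n" using n7 sum_Icc_Suc[of "n-1"] sum_Icc_Suc[of "n-2"]
      by (simp add: Suc_diff_Suc numeral_2_eq_2)
    hence e: "(\<Sum>a\<in>D. m - 2*a) = 2" using S 3 n7 r T_eq[of n] by (simp only:) linarith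
    have finD: "finite D" using Dsub finite_subset by blast
    have "D \<subseteq> {n - 2}"
    proof
      fix a assume a: "a \<in> D"
      have "m - 2*a \<le> 2" using member_le_sum[OF a, of "\<lambda>a. m - 2*a"] finD e by simp
      moreover have "a \<le> n - 2" "a \<ge> 1" using a Dsub r by auto
      ultimately show "a \<in> {n - 2}" using 3 n7 by auto
    qed
    hence "(\<Sum>a\<in>D. m - 2*a) \<le> (\<Sum>a\<in>{n-2}. m - 2*a)" by (intro sum_mono2) auto
    then show False using e 3 n7 by simp
  qed
qed

lemma Dsum:
  fixes m r n k :: nat and D :: "nat set"
  assumes k4: "k \<ge> 4" and n: "n = 2*k - 1" and m: "m = 2*n - 4" and rdef: "r = (m - 1) div 2"
    and Dsub: "D \<subseteq> {1..r}"
    and S: "T n = \<Sum>{1..r} + m + (\<Sum>a\<in>D. m - 2*a)"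
  shows "r = n - 3" and "(\<Sum>a\<in>D. n - 2 - a) = k"
proof -
  have "m - 1 = 2*(n-3) + 1" using m n k4 by simp
  then show r: "r = n - 3" using rdef by simp
  have "\<Sum>{1..n} = \<Sum>{1..n-3} + (n-2) + (n-1) + n" using n k4 sum_Icc_Suc[of "n-1"] sum_Icc_Suc[of "n-2"]
      sum_Icc_Suc[of "n-3"]
    by (simp add: Suc_diff_Suc numeral_2_eq_2 numeral_3_eq_3)
  hence e: "(\<Sum>a\<in>D. m - 2*a) = n + 1" using S m r n k4 T_eq[of n] by (simp only:) linarith
  have "(\<Sum>a\<in>D. m - 2*a) = (\<Sum>a\<in>D. 2 * (n - 2 - a))" using m by (intro sum.cong) auto
  also have "\<dots> = 2 * (\<Sum>a\<in>D. n - 2 - a)" by (simp add: sum_distrib_left)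
  finally show "(\<Sum>a\<in>D. n - 2 - a) = k" using e n k4 by linarith
qed


lemma witness4: "{1,2,3,4,8,10::nat} \<in> unrefinable_set (T 7)"
proof -
  have mp: "missing_parts {1,2,3,4,8,10::nat} = {5,6,7,9}"
    by (auto simp: missing_parts_def; presburger)
  show ?thesis
    unfolding unrefinable_set_def mem_Collect_eq distinct_partition_def refinable_def mp
    by (simp add: T_def)
qed


lemma witness5:
  fixes k :: nat assumes k5: "k \<ge> 5"
  defines "W \<equiv> ({1..2*k-5} - {k-2}) \<union> {2*k-2, 3*k-4, 4*k-6}"
  shows "W \<in> unrefinable_set (T (2*k-1))" and "Max W = 4*k-6"
proof -
  have memW: "x \<in> W \<longleftrightarrow> (1 \<le> x \<and> x \<le> 2*k-5 \<and> x \<noteq> k-2) \<or> x = 2*k-2 \<or> x = 3*k-4 \<or> x = 4*k-6" for x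
    unfolding W_def by auto
  have finW: "finite W" unfolding W_def by simp
  show mx: "Max W = 4*k-6"
  proof (rule Max_eqI[OF finW])
    fix y assume "y \<in> W" then show "y \<le> 4*k-6" using memW k5 by auto
  next
    show "4*k-6 \<in> W" using memW by auto
  qed
  have mp: "missing_parts W = {x. 1 \<le> x \<and> x \<le> 4*k-6 \<and> x \<notin> W}"
    unfolding missing_parts_def mx by auto
  obtain j where kj: "k = j + 5" using k5 by (metis add.commute le_Suc_ex)
  have memJ: "x \<in> W \<longleftrightarrow> (1 \<le> x \<and> x \<le> 2*j+5 \<and> x \<noteq> j+3) \<or> x = 2*j+8 \<or> x = 3*j+11 \<or> x = 4*j+14" for x
    unfolding memW kj by auto
  have cls: "x = j + 3 \<or> (2*j+6 \<le> x \<and> x \<le> 4*j+13 \<and> x \<noteq> 2*j+8 \<and> x \<noteq> 3*j+11)"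
    if "1 \<le> x" "x \<le> 4*k-6" "x \<notin> W" for x
    using that unfolding memJ kj by auto
  have nref: "\<not> refinable W"
  proof
    assume "refinable W"
    then obtain a b where a: "1 \<le> a" "a \<le> 4*k-6" "a \<notin> W" and b: "1 \<le> b" "b \<le> 4*k-6" "b \<notin> W"
      and ab: "a \<noteq> b" "a + b \<in> W"
      unfolding refinable_def mp by auto
    have ca: "a = j + 3 \<or> (2*j+6 \<le> a \<and> a \<le> 4*j+13 \<and> a \<noteq> 2*j+8 \<and> a \<noteq> 3*j+11)" using cls a by blast
    have cb: "b = j + 3 \<or> (2*j+6 \<le> b \<and> b \<le> 4*j+13 \<and> b \<noteq> 2*j+8 \<and> b \<noteq> 3*j+11)" using cls b by blast
    from ab(2) have S: "(a + b \<le> 2*j+5) \<or> a + b = 2*j+8 \<or> a + b = 3*j+11 \<or> a + b = 4*j+14"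
      unfolding memJ by blast
    have key: False if A: "x = j + 3 \<or> (2*j+6 \<le> x \<and> x \<le> 4*j+13 \<and> x \<noteq> 2*j+8 \<and> x \<noteq> 3*j+11)"
      and B: "2*j+6 \<le> y" "y \<le> 4*j+13" "y \<noteq> 2*j+8" "y \<noteq> 3*j+11" and xy: "x \<noteq> y"
      and S': "(x + y \<le> 2*j+5) \<or> x + y = 2*j+8 \<or> x + y = 3*j+11 \<or> x + y = 4*j+14" for x y
    proof (cases "x = j + 3")
      case True
      from S' show False
      proof (elim disjE)
        assume "x + y \<le> 2*j+5" then show False using True B(1) by linarith
      next
        assume "x + y = 2*j+8" then show False using True B(1) by linarith
      next
        assume "x + y = 3*j+11" then have "y = 2*j+8" using True by linarith
        then show False using B(3) by simp
      next
        assume "x + y = 4*j+14" then have "y = 3*j+11" using True by linarith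
        then show False using B(4) by simp
      qed
    next
      case False
      then have X: "2*j+6 \<le> x" "x \<le> 4*j+13" "x \<noteq> 2*j+8" "x \<noteq> 3*j+11" using A by auto
      from S' show False
      proof (elim disjE)
        assume "x + y \<le> 2*j+5" then show False using X(1) B(1) by linarith
      next
        assume "x + y = 2*j+8" then show False using X(1) B(1) by linarith
      next
        assume "x + y = 3*j+11" then show False using X(1) B(1) by linarith
      next
        assume e: "x + y = 4*j+14"
        have "x \<le> 2*j+8" "y \<le> 2*j+8" using e X(1) B(1) by linarith+
        then have "x \<le> 2*j+7" "y \<le> 2*j+7" using X(3) B(3) by linarith+
        then have "x = 2*j+7" "y = 2*j+7" using e by linarith+
        then show False using xy by simp
      qed
    qed
    show False
    proof (cases "b = j + 3")
      case True
      then have "a \<noteq> j + 3" using ab(1) by simp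
      then have A: "2*j+6 \<le> a" "a \<le> 4*j+13" "a \<noteq> 2*j+8" "a \<noteq> 3*j+11" using ca by auto
      show False using key[of b a, OF cb A] ab(1) S by (simp add: add.commute)
    next
      case False
      then have B: "2*j+6 \<le> b" "b \<le> 4*j+13" "b \<noteq> 2*j+8" "b \<noteq> 3*j+11" using cb by auto
      show False using key[of a b, OF ca B] ab(1) S by simp
    qed
  qed
  have d1: "({1..2*k-5} - {k-2}) \<inter> {2*k-2, 3*k-4, 4*k-6} = {}" using k5 by auto
  have "\<Sum>W = \<Sum>({1..2*k-5} - {k-2}) + \<Sum>{2*k-2, 3*k-4, 4*k-6}"
    unfolding W_def by (rule sum.union_disjoint) (use d1 in auto)
  also have "\<Sum>({1..2*k-5} - {k-2}) = \<Sum>{1..2*k-5} - (k-2)"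
  proof -
    have "k-2 \<in> {1..2*k-5}" using k5 by auto
    then show ?thesis by (simp add: sum_diff1_nat)
  qed
  also have "\<Sum>{2*k-2, 3*k-4, 4*k-6} = 9*k - 12" unfolding kj by simp
  also have "\<Sum>{1..2*k-1} = \<Sum>{1..2*k-5} + (2*k-4) + (2*k-3) + (2*k-2) + (2*k-1)"
  proof -
    have e: "2*k-1 = Suc (Suc (Suc (Suc (2*k-5))))" using k5 by simp
    have s: "\<Sum>{1..Suc r} = \<Sum>{1..r} + Suc r" for r :: nat by simp
    show ?thesis unfolding e s using k5 by simp
  qed
  moreover have "\<Sum>{1..2*k-5} \<ge> k - 2"
  proof -
    have "k-2 \<in> {1..2*k-5}" using k5 by auto
    from member_le_sum[OF this, of id] show ?thesis by simp
  qed
  ultimately have sW: "\<Sum>W = T (2*k-1)" unfolding T_eq using k5 by linarith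
  have cW: "card W \<ge> 2"
  proof -
    have "{4*k-6, 3*k-4} \<subseteq> W" using memW by auto
    from card_mono[OF finW this] show ?thesis using k5 by simp
  qed
  show "W \<in> unrefinable_set (T (2*k-1))"
  proof -
    have z: "0 \<notin> W" unfolding memJ by simp
    show ?thesis unfolding unrefinable_set_def distinct_partition_def using finW z sW cW nref by simp
  qed
qed




lemma len_filter_map_upt: "length (filter g (map f [0..<p])) = card {i. i < p \<and> g (f i)}"
  unfolding length_filter_conv_card by (rule arg_cong[where f=card]) (auto simp del: upt_Suc)

lemma KN_char:
  fixes L :: "nat set"
  assumes fin: "finite L" and ne: "L \<noteq> {}"
  shows "(i, j) \<in> KN (UNIV - L) \<longleftrightarrow> 1 \<le> i \<and> i \<le> card L \<and> 1 \<le> j \<and>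
     (\<exists>p\<in>L. card {x\<in>L. x < p} = card L - i \<and> j \<le> card {x. x < p \<and> x \<notin> L})"
proof -
  define m where "m = Max L"
  have le: "\<And>x. x \<in> L \<Longrightarrow> x \<le> m" using fin m_def by simp
  have U: "UNIV - (UNIV - L) = L" by auto
  define P where "P = map (\<lambda>j. j \<in> UNIV - L) [0..<Suc m]"
  have kp: "kn_path (UNIV - L) = P" unfolding kn_path_def P_def U m_def ..
  have N: "length (filter Not P) = card L"
  proof -
    have "length (filter Not P) = card {i. i < Suc m \<and> i \<in> L}"
      unfolding P_def len_filter_map_upt by simp
    also have "{i. i < Suc m \<and> i \<in> L} = L" using le le_imp_less_Suc by blast
    finally show ?thesis .
  qed
  have tk: "take p P = map (\<lambda>j. j \<in> UNIV - L) [0..<p]" if "p < length P" for p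
    using that unfolding P_def by (simp add: take_map)
  have lP: "length P = Suc m" unfolding P_def by simp
  have c1: "length (filter Not (take p P)) = card {x\<in>L. x < p}" if "p < length P" for p
    unfolding tk[OF that] len_filter_map_upt by (rule arg_cong[where f=card]) auto
  have c2: "length (filter id (take p P)) = card {x. x < p \<and> x \<notin> L}" if "p < length P" for p
    unfolding tk[OF that] len_filter_map_upt by (rule arg_cong[where f=card]) auto
  have nth: "P ! p = (p \<notin> L)" if "p < length P" for p
    using that unfolding P_def by (simp del: upt_Suc)
  show ?thesis
  proof
    assume "(i, j) \<in> KN (UNIV - L)"
    then have h: "1 \<le> i \<and> i \<le> card L \<and> 1 \<le> j \<and> (\<exists>p < length P. \<not> P ! p \<and> length (filter Not (take p P)) = card L - i
            \<and> j \<le> length (filter id (take p P)))"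
      unfolding KN_def Let_def kp N by simp
    then obtain p where p: "p < length P" "\<not> P ! p" "length (filter Not (take p P)) = card L - i"
            "j \<le> length (filter id (take p P))" by blast
    show "1 \<le> i \<and> i \<le> card L \<and> 1 \<le> j \<and>
     (\<exists>p\<in>L. card {x\<in>L. x < p} = card L - i \<and> j \<le> card {x. x < p \<and> x \<notin> L})"
      using h p nth[OF p(1)] c1[OF p(1)] c2[OF p(1)] by auto
  next
    assume h: "1 \<le> i \<and> i \<le> card L \<and> 1 \<le> j \<and>
     (\<exists>p\<in>L. card {x\<in>L. x < p} = card L - i \<and> j \<le> card {x. x < p \<and> x \<notin> L})"
    then obtain p where p: "p \<in> L" "card {x\<in>L. x < p} = card L - i" "j \<le> card {x. x < p \<and> x \<notin> L}" by blast
    have pl: "p < length P" using le[OF p(1)] lP by simp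
    have "\<exists>p < length P. \<not> P ! p \<and> length (filter Not (take p P)) = card L - i
            \<and> j \<le> length (filter id (take p P))"
      using pl p nth[OF pl] c1[OF pl] c2[OF pl] by auto
    then show "(i, j) \<in> KN (UNIV - L)"
      unfolding KN_def Let_def kp N using h by simp
  qed
qed




definition rk :: "nat set \<Rightarrow> nat \<Rightarrow> nat" where "rk L p = card {x\<in>L. x < p}"

lemma rk_less:
  assumes fin: "finite L" and p: "p \<in> L" and pq: "p < q"
  shows "rk L p < rk L q"
  unfolding rk_def
proof (rule psubset_card_mono)
  show "finite {x \<in> L. x < q}" using fin by simp
  show "{x \<in> L. x < p} \<subset> {x \<in> L. x < q}" using p pq by auto
qed

lemma rk_mono: "finite L \<Longrightarrow> p \<le> q \<Longrightarrow> rk L p \<le> rk L q"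
  unfolding rk_def by (intro card_mono) auto

lemma rk_lt_card: "finite L \<Longrightarrow> p \<in> L \<Longrightarrow> rk L p < card L"
  unfolding rk_def by (intro psubset_card_mono) auto

lemma rk_inj: assumes "finite L" "p \<in> L" "q \<in> L" "rk L p = rk L q" shows "p = q"
  using rk_less[OF assms(1,2)] rk_less[OF assms(1,3)] assms(4) by (metis less_irrefl nat_neq_iff)

lemma rk_less_iff: "finite L \<Longrightarrow> p \<in> L \<Longrightarrow> q \<in> L \<Longrightarrow> rk L q < rk L p \<longleftrightarrow> q < p"
  using rk_less[of L q p] rk_mono[of L p q] by (metis le_less_linear nat_less_le not_less)

lemma hook_lemma:
  fixes L :: "nat set" and t p :: nat
  assumes fin: "finite L" and ne: "L \<noteq> {}" and z0: "0 \<notin> L" and tL: "t \<notin> L"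
    and p: "p \<in> L" and pt: "t < p"
  shows "hook_length (KN (UNIV - L)) (card L - rk L p) (card {x. x \<le> t \<and> x \<notin> L}) = p - t"
proof -
  define N where "N = card L"
  define col where "col = card {x. x \<le> t \<and> x \<notin> L}"
  define ell where "ell q = card {x. x < q \<and> x \<notin> L}" for q
  define Y where "Y = KN (UNIV - L)"
  define i where "i = N - rk L p"
  have rkp: "rk L p < N" using rk_lt_card[OF fin p] N_def by simp
  have Ych: "(a, b) \<in> Y \<longleftrightarrow> 1 \<le> a \<and> a \<le> N \<and> 1 \<le> b \<and> (\<exists>q\<in>L. rk L q = N - a \<and> b \<le> ell q)" for a b
    unfolding Y_def N_def ell_def rk_def using KN_char[OF fin ne] by simp
  have finell: "finite {x. x < q \<and> x \<notin> L}" for q by simp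
  have col1: "col \<ge> 1"
  proof -
    have "{0} \<subseteq> {x. x \<le> t \<and> x \<notin> L}" using z0 by auto
    from card_mono[OF _ this] show ?thesis unfolding col_def by simp
  qed
  have ellcol: "col \<le> ell q \<longleftrightarrow> t < q" if q: "q \<in> L" for q
  proof
    assume "t < q"
    then have "{x. x \<le> t \<and> x \<notin> L} \<subseteq> {x. x < q \<and> x \<notin> L}" by auto
    from card_mono[OF finell this] show "col \<le> ell q" unfolding col_def ell_def .
  next
    assume c: "col \<le> ell q"
    show "t < q"
    proof (rule ccontr)
      assume "\<not> t < q"
      then have "q < t" using q tL by (cases "q = t") auto
      then have "{x. x < q \<and> x \<notin> L} \<subset> {x. x \<le> t \<and> x \<notin> L}"
      proof -
        assume qt: "q < t"
        have "{x. x < q \<and> x \<notin> L} \<subseteq> {x. x \<le> t \<and> x \<notin> L}" using qt by auto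
        moreover have "t \<in> {x. x \<le> t \<and> x \<notin> L}" using tL by simp
        moreover have "t \<notin> {x. x < q \<and> x \<notin> L}" using qt by simp
        ultimately show ?thesis by blast
      qed
      from psubset_card_mono[OF _ this] have "ell q < col" unfolding col_def ell_def by simp
      with c show False by simp
    qed
  qed
  have row: "(i, b) \<in> Y \<longleftrightarrow> 1 \<le> b \<and> b \<le> ell p" for b
  proof -
    have "(\<exists>q\<in>L. rk L q = N - i \<and> b \<le> ell q) \<longleftrightarrow> b \<le> ell p"
    proof
      assume "\<exists>q\<in>L. rk L q = N - i \<and> b \<le> ell q"
      then obtain q where "q \<in> L" "rk L q = rk L p" "b \<le> ell q" using i_def rkp by auto
      then show "b \<le> ell p" using rk_inj[OF fin _ p] by metis
    next
      assume "b \<le> ell p" then show "\<exists>q\<in>L. rk L q = N - i \<and> b \<le> ell q"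
        using p i_def rkp by auto
    qed
    then show ?thesis unfolding Ych using i_def rkp by auto
  qed
  have arm: "card {j'. col < j' \<and> (i, j') \<in> Y} = ell p - col"
  proof -
    have "{j'. col < j' \<and> (i, j') \<in> Y} = {col<..ell p}" unfolding row using col1 by auto
    then show ?thesis by simp
  qed
  have legset: "{i'. i < i' \<and> (i', col) \<in> Y} = (\<lambda>q. N - rk L q) ` {q\<in>L. t < q \<and> q < p}"
  proof (intro equalityI subsetI)
    fix i' assume "i' \<in> {i'. i < i' \<and> (i', col) \<in> Y}"
    then have h: "i < i'" "1 \<le> i'" "i' \<le> N" and "\<exists>q\<in>L. rk L q = N - i' \<and> col \<le> ell q"
      unfolding Ych by auto
    then obtain q where q: "q \<in> L" "rk L q = N - i'" "col \<le> ell q" by blast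
    have "t < q" using ellcol[OF q(1)] q(3) by simp
    moreover have "rk L q < rk L p" using q(2) h i_def rkp by linarith
    then have "q < p" using rk_less_iff[OF fin p q(1)] by simp
    moreover have "i' = N - rk L q" using q(2) h by linarith
    ultimately show "i' \<in> (\<lambda>q. N - rk L q) ` {q\<in>L. t < q \<and> q < p}" using q(1) by auto
  next
    fix i' assume "i' \<in> (\<lambda>q. N - rk L q) ` {q\<in>L. t < q \<and> q < p}"
    then obtain q where q: "q \<in> L" "t < q" "q < p" "i' = N - rk L q" by auto
    have rq: "rk L q < rk L p" using rk_less[OF fin q(1) q(3)] .
    have "rk L q = N - i'" using q(4) rq rkp by linarith
    moreover have "col \<le> ell q" using ellcol[OF q(1)] q(2) by simp
    ultimately have "(i', col) \<in> Y" unfolding Ych using q(1) q(4) rq rkp col1 by auto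
    moreover have "i < i'" using q(4) rq rkp i_def by linarith
    ultimately show "i' \<in> {i'. i < i' \<and> (i', col) \<in> Y}" by simp
  qed
  have injr: "inj_on (\<lambda>q. N - rk L q) {q\<in>L. t < q \<and> q < p}"
  proof (rule inj_onI)
    fix a b assume a: "a \<in> {q\<in>L. t < q \<and> q < p}" and b: "b \<in> {q\<in>L. t < q \<and> q < p}"
      and e: "N - rk L a = N - rk L b"
    have "rk L a < N" "rk L b < N" using a b rk_lt_card[OF fin] N_def by auto
    then have "rk L a = rk L b" using e by linarith
    then show "a = b" using rk_inj[OF fin] a b by auto
  qed
  have leg: "card {i'. i < i' \<and> (i', col) \<in> Y} = card {q\<in>L. t < q \<and> q < p}"
    unfolding legset by (rule card_image[OF injr])
  have split1: "ell p = col + card {x. t < x \<and> x < p \<and> x \<notin> L}"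
  proof -
    have "{x. x < p \<and> x \<notin> L} = {x. x \<le> t \<and> x \<notin> L} \<union> {x. t < x \<and> x < p \<and> x \<notin> L}" using pt by auto
    moreover have "card ({x. x \<le> t \<and> x \<notin> L} \<union> {x. t < x \<and> x < p \<and> x \<notin> L}) =
        card {x. x \<le> t \<and> x \<notin> L} + card {x. t < x \<and> x < p \<and> x \<notin> L}"
      by (rule card_Un_disjoint) auto
    ultimately show ?thesis unfolding ell_def col_def by simp
  qed
  have split2: "card {q\<in>L. t < q \<and> q < p} + card {x. t < x \<and> x < p \<and> x \<notin> L} = p - t - 1"
  proof -
    have "{t<..<p} = {q\<in>L. t < q \<and> q < p} \<union> {x. t < x \<and> x < p \<and> x \<notin> L}" by auto
    moreover have "card ({q\<in>L. t < q \<and> q < p} \<union> {x. t < x \<and> x < p \<and> x \<notin> L}) =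
        card {q\<in>L. t < q \<and> q < p} + card {x. t < x \<and> x < p \<and> x \<notin> L}"
      by (rule card_Un_disjoint) auto
    ultimately have "card {t<..<p} = card {q\<in>L. t < q \<and> q < p} + card {x. t < x \<and> x < p \<and> x \<notin> L}"
      by metis
    then show ?thesis by simp
  qed
  have "hook_length Y i col = (ell p - col) + card {q\<in>L. t < q \<and> q < p} + 1"
    unfolding hook_length_def arm leg ..
  also have "\<dots> = p - t" using split1 split2 pt by linarith
  finally show ?thesis unfolding Y_def i_def N_def col_def .
qed




lemma enum_card:
  fixes S :: "nat set" assumes inf: "infinite S"
  shows "card {x\<in>S. x < enumerate S z} = z"
proof -
  have "{x\<in>S. x < enumerate S z} = enumerate S ` {..<z}"
  proof (intro equalityI subsetI)
    fix x assume x: "x \<in> {x\<in>S. x < enumerate S z}"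
    then obtain i where i: "enumerate S i = x" using enumerate_Ex[OF inf] by auto
    then have "i < z" using x enumerate_mono_iff[OF inf] by auto
    then show "x \<in> enumerate S ` {..<z}" using i by auto
  next
    fix x assume "x \<in> enumerate S ` {..<z}"
    then obtain i where "i < z" "x = enumerate S i" by auto
    then show "x \<in> {x\<in>S. x < enumerate S z}" using enumerate_in_set[OF inf] enumerate_mono[OF _ inf] by auto
  qed
  moreover have "inj_on (enumerate S) {..<z}" by (rule inj_on_subset[OF inj_enumerate[OF inf]]) simp
  ultimately show ?thesis by (simp add: card_image)
qed

lemma final_count:
  fixes L D :: "nat set" and n k z m :: nat
  assumes fin: "finite L" and ne: "L \<noteq> {}" and z0: "0 \<notin> L"
    and k4: "k \<ge> 4" and nk: "n = 2*k - 1" and m: "m = 2*n - 4" and mdef: "m = Max L"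
    and Dsub: "D \<subseteq> {1..n-3}" and Leq: "L = ({1..n-3} - D) \<union> (\<lambda>a. m - a) ` D \<union> {m}"
    and Dk: "(\<Sum>a\<in>D. n - 2 - a) = k"
    and tL: "n - 2 \<notin> L"
    and zc: "z = card {x. x < n - 2 \<and> x \<notin> L}"
  shows "(\<Sum>i = 2..z. hook_length (KN (UNIV - L)) i (z + 1)) = k"
proof -
  define t where "t = n - 2"
  define N where "N = card L"
  define A where "A = {p\<in>L. t < p \<and> p < m}"
  have finD: "finite D" using Dsub finite_subset by blast
  have D0: "0 \<notin> D" using Dsub by auto
  have DL: "\<And>a. a \<in> D \<Longrightarrow> a \<notin> L"
  proof -
    fix a assume a: "a \<in> D"
    have "a \<le> n - 3" using a Dsub by auto
    moreover have "\<And>b. b \<in> D \<Longrightarrow> m - b \<noteq> a" using Dsub m nk k4 \<open>a \<le> n - 3\<close> by fastforce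
    ultimately show "a \<notin> L" using a Leq m nk k4 by auto
  qed
  have below: "{x. x < t \<and> x \<notin> L} = insert 0 D"
  proof (intro equalityI subsetI)
    fix x assume x: "x \<in> {x. x < t \<and> x \<notin> L}"
    show "x \<in> insert 0 D"
    proof (cases "x = 0")
      case False
      then have "x \<in> {1..n-3}" using x t_def by auto
      then show ?thesis using x Leq by auto
    qed simp
  next
    fix x assume x: "x \<in> insert 0 D"
    show "x \<in> {x. x < t \<and> x \<notin> L}"
    proof (cases "x = 0")
      case True then show ?thesis using z0 t_def nk k4 by simp
    next
      case False
      then have xD: "x \<in> D" using x by simp
      then have "x \<le> n - 3" using Dsub by auto
      then have "x < t" using t_def nk k4 by linarith
      then show ?thesis using DL[OF xD] by simp
    qed
  qed
  have zD: "z = card D + 1" using zc below finD D0 t_def by simp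
  have col: "card {x. x \<le> t \<and> x \<notin> L} = z + 1"
  proof -
    have "{x. x \<le> t \<and> x \<notin> L} = insert t {x. x < t \<and> x \<notin> L}" using tL t_def by auto
    then show ?thesis using zc t_def by simp
  qed
  have Aeq: "A = (\<lambda>a. m - a) ` D"
  proof (intro equalityI subsetI)
    fix p assume "p \<in> A"
    then have p: "p \<in> L" "t < p" "p < m" unfolding A_def by auto
    then show "p \<in> (\<lambda>a. m - a) ` D" using Leq t_def by auto
  next
    fix p assume "p \<in> (\<lambda>a. m - a) ` D"
    then obtain a where a: "a \<in> D" "p = m - a" by auto
    have "p \<in> L" using Leq a by auto
    moreover have "1 \<le> a" "a \<le> n - 3" using a Dsub by auto
    moreover have "t < p" "p < m" using \<open>1 \<le> a\<close> \<open>a \<le> n - 3\<close> a(2) m t_def nk k4 by linarith+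
    ultimately show "p \<in> A" unfolding A_def by auto
  qed
  have injD: "inj_on (\<lambda>a. m - a) D"
  proof (rule inj_onI)
    fix x y assume "x \<in> D" "y \<in> D" "m - x = m - y"
    then have "x \<le> n - 3" "y \<le> n - 3" "m - x = m - y" using Dsub by auto
    then show "x = y" using m nk k4 by linarith
  qed
  have cA: "card A = card D" unfolding Aeq by (rule card_image[OF injD])
  have finA: "finite A" unfolding A_def using fin by simp
  have mL: "m \<in> L" using mdef fin ne by simp
  have mA: "m \<notin> A" unfolding A_def by simp
  have rkm: "rk L m = N - 1"
  proof -
    have le: "\<And>x. x \<in> L \<Longrightarrow> x \<le> m" using mdef fin by simp
    have "{x\<in>L. x < m} = L - {m}" using le by (auto intro: le_neq_implies_less)
    then show ?thesis unfolding rk_def N_def using mL fin by simp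
  qed
  define h where "h p = N - rk L p" for p
  have hA: "h ` A \<subseteq> {2..z}"
  proof
    fix i assume "i \<in> h ` A"
    then obtain p where p: "p \<in> A" "i = h p" by auto
    have pL: "p \<in> L" "t < p" "p < m" using p(1) unfolding A_def by auto
    have "rk L p < rk L m" using rk_less[OF fin pL(1) pL(3)] .
    then have i2: "2 \<le> i" using rkm p(2) h_def[of p] rk_lt_card[OF fin mL] N_def by linarith
    have sub: "L - insert m A \<subseteq> {x\<in>L. x < p}"
    proof
      fix x assume x: "x \<in> L - insert m A"
      have "x \<le> m" using x mdef fin by simp
      then have "x \<le> t" using x unfolding A_def by auto
      then show "x \<in> {x\<in>L. x < p}" using x pL by auto
    qed
    have "card (L - insert m A) = N - (card A + 1)"
      using card_Diff_subset[of "insert m A" L] finA mA mL A_def N_def by (simp add: insert_subset)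
    moreover have "card (L - insert m A) \<le> rk L p" unfolding rk_def using card_mono[OF _ sub] fin by simp
    moreover have "card A + 1 \<le> N"
    proof -
      have "insert m A \<subseteq> L" using mL A_def by auto
      from card_mono[OF fin this] show ?thesis using finA mA N_def by simp
    qed
    ultimately have "i \<le> z" using p(2) h_def[of p] zD cA by linarith
    with i2 show "i \<in> {2..z}" by simp
  qed
  have injh: "inj_on h A"
  proof (rule inj_onI)
    fix a b assume a: "a \<in> A" and b: "b \<in> A" and e: "h a = h b"
    have aL: "a \<in> L" "b \<in> L" using a b A_def by auto
    have "rk L a < N" "rk L b < N" using aL rk_lt_card[OF fin] N_def by auto
    then have "rk L a = rk L b" using e h_def[of a] h_def[of b] by linarith
    then show "a = b" using rk_inj[OF fin aL] by simp
  qed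
  have hAeq: "h ` A = {2..z}"
  proof (rule card_subset_eq)
    show "finite {2..z}" by simp
    show "h ` A \<subseteq> {2..z}" by (rule hA)
    show "card (h ` A) = card {2..z}" using card_image[OF injh] cA zD by simp
  qed
  have "(\<Sum>i = 2..z. hook_length (KN (UNIV - L)) i (z + 1)) = (\<Sum>i\<in>h ` A. hook_length (KN (UNIV - L)) i (z + 1))"
    using hAeq by simp
  also have "\<dots> = (\<Sum>p\<in>A. hook_length (KN (UNIV - L)) (h p) (z + 1))"
    by (rule sum.reindex[OF injh, unfolded comp_def])
  also have "\<dots> = (\<Sum>p\<in>A. p - t)"
  proof (rule sum.cong[OF refl])
    fix p assume p: "p \<in> A"
    have pL: "p \<in> L" "t < p" using p A_def by auto
    have tL': "t \<notin> L" using tL t_def by simp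
    show "hook_length (KN (UNIV - L)) (h p) (z + 1) = p - t"
      using hook_lemma[OF fin ne z0 tL' pL] col h_def N_def by simp
  qed
  also have "\<dots> = (\<Sum>a\<in>D. m - a - t)" unfolding Aeq by (simp add: sum.reindex[OF injD])
  also have "\<dots> = (\<Sum>a\<in>D. n - 2 - a)" using m t_def by (intro sum.cong) auto
  finally show ?thesis using Dk by simp
qed


theorem proposition3p10:
  fixes k n z :: nat and lam :: "nat set"
  assumes "k \<ge> 4" and "n = 2 * k - 1"
    and "lam \<in> overline_U (T n)"
    and "enumerate (UNIV - lam) z = n - 2"
  shows "(\<Sum>i = 2..z. hook_length (KN (UNIV - lam)) i (z + 1)) = k"
proof -
  have k4: "k \<ge> 4" and nk: "n = 2 * k - 1" using assms(1,2) .
  from assms(3) have o: "lam \<in> maximal_unrefinable (T n)" "card (missing_parts lam) = Max lam div 2"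
    unfolding overline_U_def by auto
  then have u: "lam \<in> unrefinable_set (T n)" and mx: "\<forall>mu\<in>unrefinable_set (T n). Max mu \<le> Max lam"
    unfolding maximal_unrefinable_def by auto
  from u have fin: "finite lam" and z0: "0 \<notin> lam" and c2: "card lam \<ge> 2" and sl: "\<Sum>lam = T n"
    and nref: "\<not> refinable lam"
    unfolding unrefinable_set_def distinct_partition_def by auto
  have ne: "lam \<noteq> {}" using c2 by auto
  define m where "m = Max lam"
  have pair: "\<And>a. 1 \<le> a \<Longrightarrow> 2*a < m \<Longrightarrow> (a \<in> lam \<longleftrightarrow> m - a \<notin> lam)"
    using pair_structure(1)[OF fin ne z0 nref o(2)] m_def by blast
  have ev: "even m \<Longrightarrow> m div 2 \<notin> lam"
    using pair_structure(2)[OF fin ne z0 nref o(2)] m_def by blast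
  define r where "r = (m - 1) div 2"
  define D where "D = {a \<in> {1..r}. a \<notin> lam}"
  have Leq: "lam = ({1..r} - D) \<union> (\<lambda>a. m - a) ` D \<union> {m}"
    and Ls: "\<Sum>lam = \<Sum>{1..r} + m + (\<Sum>a\<in>D. m - 2*a)"
    using decomp[OF fin z0 ne m_def pair ev r_def D_def] by blast+
  have Dsub: "D \<subseteq> {1..r}" unfolding D_def by auto
  have n7: "n \<ge> 7" using k4 nk by simp
  have up: "m \<le> 2*n - 4" using bound[OF n7 r_def Dsub] sl Ls by simp
  have lo: "2*n - 4 \<le> m"
  proof (cases "k = 4")
    case True
    then have n: "n = 7" using nk by simp
    have "Max {1,2,3,4,8,10::nat} \<le> m" using mx witness4 m_def unfolding n by blast
    then show ?thesis using n by simp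
  next
    case False
    then have k5: "k \<ge> 5" using k4 by simp
    have "Max (({1..2*k-5} - {k-2}) \<union> {2*k-2, 3*k-4, 4*k-6}) \<le> m"
      using mx witness5(1)[OF k5] m_def nk by blast
    then have "4*k-6 \<le> m" using witness5(2)[OF k5] by simp
    then show ?thesis using nk k5 by linarith
  qed
  have m: "m = 2*n - 4" using up lo by simp
  have r: "r = n - 3" and Dk: "(\<Sum>a\<in>D. n - 2 - a) = k"
    using Dsum[OF k4 nk m r_def Dsub] sl Ls by simp_all
  have tL: "n - 2 \<notin> lam"
  proof -
    have "even m" "m div 2 = n - 2" using m n7 by auto
    then show ?thesis using ev by simp
  qed
  have inf: "infinite (UNIV - lam)" using fin by (simp add: Diff_infinite_finite)
  have zc: "z = card {x. x < n - 2 \<and> x \<notin> lam}"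
  proof -
    have "card {x\<in>UNIV - lam. x < enumerate (UNIV - lam) z} = z" by (rule enum_card[OF inf])
    then show ?thesis unfolding assms(4) by (simp add: conj_commute)
  qed
  show ?thesis
    by (rule final_count[OF fin ne z0 k4 nk m m_def _ _ Dk tL zc]) (use Dsub Leq r in simp_all)
qed

end
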